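(* Let $\lambda/\mu$ be an r-shape and $\mathbf a,\mathbf b$ column flags for it, with conjugate flags $\mathbf a',\mathbf b'$. Then $$\mathsf S^{\mathbf a,\mathbf b}_{\lambda/\mu}(\mathbf y/\mathbf z)=\overline{\mathsf S}^{\mathbf a',\mathbf b'}_{\lambda'/\mu'}(\overline{\mathbf z}/\overline{\mathbf y}),$$ where $\lambda'/\mu'$ is the conjugate r-shape and $\overline{\mathbf y}=(-y_i)_{i\in\mathbb Z}$, $\overline{\mathbf z}=(-z_i)_{i\in\mathbb Z}$.
   Context: Young diagrams in English notation; $\lambda'$ conjugate partition. An r-shape is $(\lambda/\mu,r)$ with shifted contents $c(i,j)=j-i+r-1+\lambda'_1$. The conjugate r-shape of $(\lambda/\mu,r)$ is the transposed diagram $\lambda'/\mu'$ with root content $-r'$, where $r'$ is the content of the top-right cell of $\lambda/\mu$ (so each cell's content is negated under transposition). Column flags for $\lambda/\mu$: for $n\ge\lambda_1$, $\mathbf a,\mathbf b\in\mathbb Z^n$ with $a_i-a_{i+1}\le\mu'_i-\mu'_{i+1}+1$, $b_i-b_{i+1}\le\lambda'_i-\lambda'_{i+1}+1$ whenever $\mu'_i<\lambda'_{i+1}$. Conjugate flags: $a'_i=a_i+c(\gamma_i)$, $b'_i=b_i+c(\delta_i)$, $\gamma_i,\delta_i$ top and bottom cells of column $i$ of $\lambda/\mu$; these are row flags for $\lambda'/\mu'$. Row flags for an r-shape $\kappa/\nu$: vectors $\mathbf a',\mathbf b'$ with $a'_i\le a'_{i+1}$, $b'_i\le b'_{i+1}$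 whenever $\nu_i<\kappa_{i+1}$. $\mathbf y_{a,b}=(y_a,\ldots,y_b)$ (empty if $a>b$). $e_n(\mathbf x/\mathbf w)=\sum_{i=0}^n(-1)^{n-i}e_i(\mathbf x)h_{n-i}(\mathbf w)$, $h_n(\mathbf x/\mathbf w)=\sum_{i=0}^n(-1)^{n-i}h_i(\mathbf x)e_{n-i}(\mathbf w)$ ($e_0=h_0=1$, zero for negative index). Column flagged function: $\mathsf S^{\mathbf a,\mathbf b}_{\lambda/\mu}(\mathbf y/\mathbf z)=\det[e_{\lambda'_i-i-\mu'_j+j}(\mathbf y_{a_j,b_i}/\mathbf z_{a'_j,b'_i})]_{1\le i,j\le n}$. Row flagged function for an r-shape $\kappa/\nu$ with row flags $\mathbf a',\mathbf b'$: $\overline{\mathsf S}^{\mathbf a',\mathbf b'}_{\kappa/\nu}(\mathbf y/\mathbf z)=\det[h_{\kappa_i-\nu_j-i+j}(\mathbf y_{a'_j,b'_i}/\mathbf z_{a_j,b_i})]_{1\le i,j\le n}$ for $n\ge\ell(\kappa)$, where $a_j=a'_j+c(\zeta_j)$, $b_i=b'_i+c(\xi_i)$ with $\zeta_j,\xi_i$ the leftmost cell of row $j$ and rightmost cell of row $i$ of $\kappa/\nu$ (i.e. $\mathbf a,\mathbf b$ are the column flags of the conjugate shape whose conjugates are $\mathbf a',\mathbf b'$). *)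

theory Defs
  imports Main "Jordan_Normal_Form.Determinant"
begin

text \<open>Partitions are functions nat => nat indexed from 1 (index 0 is ignored),
  weakly decreasing and eventually zero.\<close>
definition is_partition :: "(nat \<Rightarrow> nat) \<Rightarrow> bool" where
  "is_partition lam \<longleftrightarrow> (\<forall>i\<ge>1. lam (Suc i) \<le> lam i) \<and> (\<exists>N. \<forall>i>N. lam i = 0)"

definition conj_part :: "(nat \<Rightarrow> nat) \<Rightarrow> nat \<Rightarrow> nat" where
  "conj_part lam j = card {i. 1 \<le> i \<and> j \<le> lam i}"

definition skew_shape :: "(nat \<Rightarrow> nat) \<Rightarrow> (nat \<Rightarrow> nat) \<Rightarrow> bool" where
  "skew_shape lam mu \<longleftrightarrow> is_partition lam \<and> is_partition mu \<and> (\<forall>i\<ge>1. mu i \<le> lam i)"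

definition content :: "(nat \<Rightarrow> nat) \<Rightarrow> int \<Rightarrow> nat \<Rightarrow> nat \<Rightarrow> int" where
  "content lam r i j = int j - int i + r - 1 + int (conj_part lam 1)"

definition conj_root :: "(nat \<Rightarrow> nat) \<Rightarrow> int \<Rightarrow> int" where
  "conj_root lam r = - content lam r 1 (lam 1)"

definition column_flags :: "(nat \<Rightarrow> nat) \<Rightarrow> (nat \<Rightarrow> nat) \<Rightarrow> nat \<Rightarrow> (nat \<Rightarrow> int) \<Rightarrow> (nat \<Rightarrow> int) \<Rightarrow> bool" where
  "column_flags lam mu n a b \<longleftrightarrow> lam 1 \<le> n \<and>
     (\<forall>i. 1 \<le> i \<and> i < n \<and> conj_part mu i < conj_part lam (Suc i) \<longrightarrow>
        a i - a (Suc i) \<le> int (conj_part mu i) - int (conj_part mu (Suc i)) + 1 \<and>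
        b i - b (Suc i) \<le> int (conj_part lam i) - int (conj_part lam (Suc i)) + 1)"

text \<open>Conjugate flags: a'_i = a_i + c(gamma_i), b'_i = b_i + c(delta_i), with gamma_i = (mu'_i+1, i)
  the top cell and delta_i = (lam'_i, i) the bottom cell of column i.\<close>
definition conj_flag_a :: "(nat \<Rightarrow> nat) \<Rightarrow> (nat \<Rightarrow> nat) \<Rightarrow> int \<Rightarrow> (nat \<Rightarrow> int) \<Rightarrow> nat \<Rightarrow> int" where
  "conj_flag_a lam mu r a i = a i + content lam r (conj_part mu i + 1) i"

definition conj_flag_b :: "(nat \<Rightarrow> nat) \<Rightarrow> (nat \<Rightarrow> nat) \<Rightarrow> int \<Rightarrow> (nat \<Rightarrow> int) \<Rightarrow> nat \<Rightarrow> int" where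
  "conj_flag_b lam mu r b i = b i + content lam r (conj_part lam i) i"

definition esym :: "nat \<Rightarrow> (int \<Rightarrow> 'a::comm_ring_1) \<Rightarrow> int set \<Rightarrow> 'a" where
  "esym k x A = (\<Sum>S | S \<subseteq> A \<and> card S = k. \<Prod>i\<in>S. x i)"

definition hsym :: "nat \<Rightarrow> (int \<Rightarrow> 'a::comm_ring_1) \<Rightarrow> int set \<Rightarrow> 'a" where
  "hsym k x A = (\<Sum>m | (\<forall>i. i \<notin> A \<longrightarrow> m i = 0) \<and> (\<Sum>i\<in>A. m i) = k. \<Prod>i\<in>A. x i ^ m i)"

definition super_e :: "int \<Rightarrow> (int \<Rightarrow> 'a::comm_ring_1) \<Rightarrow> int set \<Rightarrow> (int \<Rightarrow> 'a) \<Rightarrow> int set \<Rightarrow> 'a" where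
  "super_e k x A w B = (if k < 0 then 0 else
     (\<Sum>i\<le>nat k. (-1) ^ (nat k - i) * esym i x A * hsym (nat k - i) w B))"

definition super_h :: "int \<Rightarrow> (int \<Rightarrow> 'a::comm_ring_1) \<Rightarrow> int set \<Rightarrow> (int \<Rightarrow> 'a) \<Rightarrow> int set \<Rightarrow> 'a" where
  "super_h k x A w B = (if k < 0 then 0 else
     (\<Sum>i\<le>nat k. (-1) ^ (nat k - i) * hsym i x A * esym (nat k - i) w B))"

text \<open>Matrix entries (i,j) are 0-indexed, so they refer to i+1, j+1.\<close>
definition col_S :: "(nat \<Rightarrow> nat) \<Rightarrow> (nat \<Rightarrow> nat) \<Rightarrow> int \<Rightarrow> nat \<Rightarrow> (nat \<Rightarrow> int) \<Rightarrow> (nat \<Rightarrow> int)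
    \<Rightarrow> (int \<Rightarrow> 'a::comm_ring_1) \<Rightarrow> (int \<Rightarrow> 'a) \<Rightarrow> 'a" where
  "col_S lam mu r n a b y z = det (mat n n (\<lambda>(i, j).
     super_e (int (conj_part lam (Suc i)) - int (Suc i) - int (conj_part mu (Suc j)) + int (Suc j))
       y {a (Suc j) .. b (Suc i)}
       z {conj_flag_a lam mu r a (Suc j) .. conj_flag_b lam mu r b (Suc i)}))"

text \<open>Row flagged function for the r-shape (kap/nu, s) with row flags a', b';
  a_j = a'_j + c(zeta_j), b_i = b'_i + c(xi_i), zeta_j = (j, nu_j + 1) leftmost cell of row j,
  xi_i = (i, kap_i) rightmost cell of row i.\<close>
definition row_S :: "(nat \<Rightarrow> nat) \<Rightarrow> (nat \<Rightarrow> nat) \<Rightarrow> int \<Rightarrow> nat \<Rightarrow> (nat \<Rightarrow> int) \<Rightarrow> (nat \<Rightarrow> int)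
    \<Rightarrow> (int \<Rightarrow> 'a::comm_ring_1) \<Rightarrow> (int \<Rightarrow> 'a) \<Rightarrow> 'a" where
  "row_S kap nu s n a' b' y z = det (mat n n (\<lambda>(i, j).
     super_h (int (kap (Suc i)) - int (nu (Suc j)) - int (Suc i) + int (Suc j))
       y {a' (Suc j) .. b' (Suc i)}
       z {a' (Suc j) + content kap s (Suc j) (nu (Suc j) + 1) ..
          b' (Suc i) + content kap s (Suc i) (kap (Suc i))}))"

end

theory Submission
  imports Defs
begin

lemma prod_neg: "(\<Prod>i\<in>S. - x i) = (-1) ^ card S * (\<Prod>i\<in>S. x i :: 'a::comm_ring_1)"
proof -
  have "(\<Prod>i\<in>S. - x i) = (\<Prod>i\<in>S. (-1) * x i)" by simp
  also have "\<dots> = (\<Prod>i\<in>S. (-1::'a)) * (\<Prod>i\<in>S. x i)" by (rule prod.distrib)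
  finally show ?thesis by simp
qed

lemma esym_neg: "esym k (\<lambda>i. - x i) A = (-1) ^ k * esym k x A"
  unfolding esym_def sum_distrib_left
proof (rule sum.cong[OF refl])
  fix S assume "S \<in> {S. S \<subseteq> A \<and> card S = k}"
  then have "card S = k" by blast
  then show "(\<Prod>i\<in>S. - x i) = (-1) ^ k * (\<Prod>i\<in>S. x i)" using prod_neg[of x S] by metis
qed

lemma hsym_neg: "hsym k (\<lambda>i. - x i) A = (-1) ^ k * hsym k x A"
  unfolding hsym_def
proof (simp add: sum_distrib_left, rule sum.cong[OF refl])
  fix m assume "m \<in> {m. (\<forall>i. i \<notin> A \<longrightarrow> m i = 0) \<and> sum m A = k}"
  then have s: "sum m A = k" by simp
  have "(\<Prod>i\<in>A. (- x i) ^ m i) = (\<Prod>i\<in>A. (-1) ^ m i * x i ^ m i)"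
    by (rule prod.cong[OF refl]) (rule power_minus)
  also have "\<dots> = (\<Prod>i\<in>A. (-1) ^ m i) * (\<Prod>i\<in>A. x i ^ m i)"
    by (rule prod.distrib)
  also have "(\<Prod>i\<in>A. (-1::'a) ^ m i) = (-1) ^ k" using s power_sum[of "-1::'a" m A] by metis
  finally show "(\<Prod>i\<in>A. (- x i) ^ m i) = (-1) ^ k * (\<Prod>i\<in>A. x i ^ m i)" .
qed

lemma super_e_h: "super_e k x A w B = super_h k (\<lambda>i. - w i) B (\<lambda>i. - x i) A"
proof (cases "k < 0")
  case True then show ?thesis by (simp add: super_e_def super_h_def)
next
  case False
  define K where "K = nat k"
  have "super_h k (\<lambda>i. - w i) B (\<lambda>i. - x i) A =
     (\<Sum>i\<le>K. (-1) ^ (K - i) * ((-1) ^ i * hsym i w B) * ((-1) ^ (K - i) * esym (K - i) x A))"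
    using False by (simp add: super_h_def K_def hsym_neg esym_neg)
  also have "\<dots> = (\<Sum>i\<le>K. (-1) ^ i * hsym i w B * esym (K - i) x A)"
  proof (rule sum.cong[OF refl])
    fix i
    have "((-1::'a) ^ (K - i)) * (-1) ^ (K - i) = 1"
      by (simp add: power_add[symmetric])
    then show "(-1) ^ (K - i) * ((-1) ^ i * hsym i w B) * ((-1) ^ (K - i) * esym (K - i) x A)
      = (-1) ^ i * hsym i w B * esym (K - i) x A"
      by (metis (no_types, lifting) mult.assoc mult.commute mult.left_commute mult_1)
  qed
  also have "\<dots> = (\<Sum>j\<le>K. (-1) ^ (K - j) * esym j x A * hsym (K - j) w B)"
    by (rule sum.reindex_bij_witness[of _ "\<lambda>j. K - j" "\<lambda>j. K - j"]) (auto simp: mult_ac)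
  finally show ?thesis using False by (simp add: super_e_def K_def)
qed

lemma part_le1_aux: "is_partition lam \<Longrightarrow> lam (Suc k) \<le> lam 1"
proof (induction k)
  case 0 then show ?case by simp
next
  case (Suc k)
  then have "lam (Suc (Suc k)) \<le> lam (Suc k)" unfolding is_partition_def by auto
  then show ?case using Suc by linarith
qed

lemma part_le1: "is_partition lam \<Longrightarrow> 1 \<le> k \<Longrightarrow> lam k \<le> lam 1"
  using part_le1_aux[of lam "k - 1"] by simp

lemma conj_conj_1: assumes "is_partition lam" shows "conj_part (conj_part lam) 1 = lam 1"
proof -
  obtain N where N: "\<forall>i>N. lam i = 0" using assms unfolding is_partition_def by auto
  have fin: "finite {k. 1 \<le> k \<and> i \<le> lam k}" if "1 \<le> i" for i
    by (rule finite_subset[of _ "{..N}"]) (use N that in \<open>auto simp: not_le[symmetric]\<close>)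
  have "{i. 1 \<le> i \<and> 1 \<le> conj_part lam i} = {1..lam 1}"
  proof (intro equalityI subsetI)
    fix i assume "i \<in> {i. 1 \<le> i \<and> 1 \<le> conj_part lam i}"
    then have i: "1 \<le> i" and "card {k. 1 \<le> k \<and> i \<le> lam k} \<noteq> 0" by (auto simp: conj_part_def)
    then have "{k. 1 \<le> k \<and> i \<le> lam k} \<noteq> {}" by (metis card.empty)
    then obtain k where "1 \<le> k" "i \<le> lam k" by blast
    then show "i \<in> {1..lam 1}" using i part_le1[OF assms] by fastforce
  next
    fix i assume "i \<in> {1..lam 1}"
    then have i: "1 \<le> i" "i \<le> lam 1" by auto
    then have "1 \<in> {k. 1 \<le> k \<and> i \<le> lam k}" by auto
    then have "card {k. 1 \<le> k \<and> i \<le> lam k} \<noteq> 0" using fin[OF i(1)] by auto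
    then show "i \<in> {i. 1 \<le> i \<and> 1 \<le> conj_part lam i}" using i by (simp add: conj_part_def)
  qed
  then show ?thesis by (simp add: conj_part_def)
qed

theorem proposition3p3:
  fixes lam mu :: "nat \<Rightarrow> nat" and r :: int and n :: nat
    and a b :: "nat \<Rightarrow> int" and y z :: "int \<Rightarrow> 'a::comm_ring_1"
  assumes "skew_shape lam mu"
    and "column_flags lam mu n a b"
  shows "col_S lam mu r n a b y z =
         row_S (conj_part lam) (conj_part mu) (conj_root lam r) n
               (conj_flag_a lam mu r a) (conj_flag_b lam mu r b)
               (\<lambda>i. - z i) (\<lambda>i. - y i)"
proof -
  have cc: "conj_part (conj_part lam) 1 = lam 1"
    using assms(1) conj_conj_1 unfolding skew_shape_def by blast
  show ?thesis
    unfolding col_S_def row_S_def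
    apply (rule arg_cong[where f = det])
    apply (rule arg_cong[where f = "mat n n"])
    apply (rule ext)
    apply (clarsimp simp: super_e_h)
    apply (simp add: conj_flag_a_def conj_flag_b_def content_def conj_root_def algebra_simps)
    using cc by simp
qed

end
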